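(* Fix $d\ge0$ and for a unit vector $z\in\mathbb{S}^{n-1}$ let $\mathrm{slab}_z(x)=\mathbf{1}[-d\le z\cdot x\le d]$. If $z,z'\in\mathbb{S}^{n-1}$ satisfy $0<\|z-z'\|_2\le 1/3$, then \[ \Pr_{\mathbf{x}\sim N(0,I_n)}[\mathrm{slab}_z(\mathbf{x})\ne\mathrm{slab}_{z'}(\mathbf{x})]\le 5\|z-z'\|_2\sqrt{\ln\!\Big(\frac{1}{\|z-z'\|_2}\Big)} . \]
   Context: $N(0,I_n)$ is the standard Gaussian distribution on $\mathbb{R}^n$. *)

theory Defs
  imports "HOL-Analysis.Analysis"
begin

text \<open>Standard Gaussian N(0, I_n) on R^n, with R^n rendered as real^'n (n = CARD('n)):
  the measure with density (2 pi)^(-n/2) exp(-|x|^2/2) w.r.t. Lebesgue measure.\<close>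
definition std_gaussian :: "(real^'n) measure" where
  "std_gaussian = density lborel
     (\<lambda>x. ennreal ((2 * pi) powr (- real CARD('n) / 2) * exp (- (norm x)\<^sup>2 / 2)))"

definition slab :: "real \<Rightarrow> real^'n \<Rightarrow> real^'n \<Rightarrow> real" where
  "slab d z x = (if - d \<le> z \<bullet> x \<and> z \<bullet> x \<le> d then 1 else 0)"

end

theory Submission
  imports Defs "HOL-Probability.Probability"
begin
lemma integral_lborel_prod:
  fixes f :: "'a::euclidean_space \<Rightarrow> real \<Rightarrow> complex"
  assumes "\<And>b. b \<in> Basis \<Longrightarrow> integrable lborel (f b)"
  shows "(\<integral>x. (\<Prod>b\<in>Basis. f b (x \<bullet> b)) \<partial>lborel) = (\<Prod>b\<in>Basis. (\<integral>x. f b x \<partial>lborel))"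
proof -
  interpret product_sigma_finite "\<lambda>_. lborel :: real measure" by standard
  have m: "\<And>b. b \<in> Basis \<Longrightarrow> f b \<in> borel_measurable borel"
    using assms borel_measurable_integrable by auto
  have "(\<integral>x. (\<Prod>b\<in>Basis. f b (x \<bullet> b)) \<partial>lborel) =
     (\<integral>g. (\<Prod>b\<in>Basis. f b ((\<Sum>c\<in>Basis. g c *\<^sub>R c) \<bullet> b)) \<partial>(\<Pi>\<^sub>M b\<in>Basis. lborel))"
    apply (subst lborel_eq)
    apply (rule integral_distr)
     apply measurable
    using m by measurable
  also have "\<dots> = (\<integral>g. (\<Prod>b\<in>Basis. f b (g b)) \<partial>(\<Pi>\<^sub>M b\<in>Basis. lborel))"
    by (intro Bochner_Integration.integral_cong refl prod.cong)
       (auto simp: inner_sum_left inner_Basis if_distrib sum.delta cong: if_cong)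
  also have "\<dots> = (\<Prod>b\<in>Basis. (\<integral>x. f b x \<partial>lborel))"
    by (rule product_integral_prod) (auto intro: assms)
  finally show ?thesis .
qed

lemma card_Basis_vec: "card (Basis :: (real^'n) set) = CARD('n)"
  using DIM_cart[where 'a=real and 'b='n] by simp

lemma gauss_dens_prod:
  fixes x :: "real^'n"
  shows "(2 * pi) powr (- real CARD('n) / 2) * exp (- (norm x)\<^sup>2 / 2)
       = (\<Prod>b\<in>(Basis::(real^'n) set). std_normal_density (x \<bullet> b))"
proof -
  have n2: "(norm x)\<^sup>2 = (\<Sum>b\<in>(Basis::(real^'n) set). (x \<bullet> b)\<^sup>2)"
    unfolding power2_norm_eq_inner by (subst euclidean_inner) (simp add: power2_eq_square)
  have e: "exp (- (norm x)\<^sup>2 / 2) = (\<Prod>b\<in>(Basis::(real^'n) set). exp (- (x \<bullet> b)\<^sup>2 / 2))"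
    by (simp add: n2 exp_sum[symmetric] sum_negf sum_divide_distrib)
  have s: "1 / sqrt (2*pi) = (2*pi) powr (-1/2)"
  proof -
    have "sqrt (2*pi) = (2*pi) powr (1/2)" by (rule powr_half_sqrt[symmetric]) simp
    then show ?thesis using powr_minus_divide[of "2*pi" "1/2"] by simp
  qed
  have p1: "((2*pi) powr (-1/2)) ^ CARD('n) = ((2*pi) powr (-1/2)) powr (real CARD('n))"
    by (rule powr_realpow[symmetric]) simp
  have c: "(2 * pi) powr (- real CARD('n) / 2) = (\<Prod>b\<in>(Basis::(real^'n) set). 1 / sqrt (2*pi))"
    unfolding prod_constant card_Basis_vec s p1 powr_powr by simp
  show ?thesis
    unfolding c e std_normal_density_def prod.distrib[symmetric] by (rule prod.cong) simp_all
qed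


lemma std_gaussian_eq:
  "(std_gaussian :: (real^'n) measure) =
     density lborel (\<lambda>x. ennreal (\<Prod>b\<in>(Basis::(real^'n) set). std_normal_density (x \<bullet> b)))"
  unfolding std_gaussian_def gauss_dens_prod ..

lemma nn_integral_std_normal: "(\<integral>\<^sup>+t. ennreal (std_normal_density t) \<partial>lborel) = 1"
proof -
  interpret prob_space "density lborel (\<lambda>x. ennreal (normal_density 0 1 x))" by (rule prob_space_normal_density) simp
  have "emeasure (density lborel (\<lambda>x. ennreal (normal_density 0 1 x))) UNIV = 1"
    using emeasure_space_1 by simp
  then show ?thesis by (simp add: emeasure_density)
qed

lemma prob_space_std_gaussian: "prob_space (std_gaussian :: (real^'n) measure)"
proof
  have "emeasure (std_gaussian :: (real^'n) measure) (space std_gaussian)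
     = (\<integral>\<^sup>+x. (\<Prod>b\<in>(Basis::(real^'n) set). ennreal (std_normal_density (x \<bullet> b))) \<partial>lborel)"
    unfolding std_gaussian_eq
    by (simp add: emeasure_density prod_ennreal)
  also have "\<dots> = (\<Prod>b\<in>(Basis::(real^'n) set). (\<integral>\<^sup>+t. ennreal (std_normal_density t) \<partial>lborel))"
    by (rule nn_integral_lborel_prod) auto
  also have "\<dots> = 1" by (simp add: nn_integral_std_normal)
  finally show "emeasure (std_gaussian :: (real^'n) measure) (space std_gaussian) = 1" .
qed


lemma char_std_normal_integral:
  "(CLINT s|lborel. std_normal_density s *\<^sub>R iexp (c * s)) = complex_of_real (exp (- (c^2) / 2))"
  and integrable_std_normal_iexp:
  "integrable lborel (\<lambda>s. std_normal_density s *\<^sub>R iexp (c * s))"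
proof -
  interpret real_distribution std_normal_distribution by (rule real_dist_normal_dist)
  have "integrable std_normal_distribution (\<lambda>s. iexp (c * s))"
    by (rule integrable_iexp) auto
  then show "integrable lborel (\<lambda>s. std_normal_density s *\<^sub>R iexp (c * s))"
    by (subst (asm) integrable_density) auto
  have "char std_normal_distribution c = (CLINT s|lborel. std_normal_density s *\<^sub>R iexp (c * s))"
    unfolding char_def by (subst integral_density) auto
  then show "(CLINT s|lborel. std_normal_density s *\<^sub>R iexp (c * s)) = complex_of_real (exp (- (c^2) / 2))"
    by (simp add: char_std_normal_distribution)
qed

lemma marginal_std_gaussian:
  fixes u :: "real^'n"
  assumes u: "norm u = 1"
  shows "distr (std_gaussian :: (real^'n) measure) borel (\<lambda>x. u \<bullet> x) = std_normal_distribution"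
proof (rule Levy_uniqueness)
  interpret G: prob_space "std_gaussian :: (real^'n) measure" by (rule prob_space_std_gaussian)
  show "real_distribution (distr (std_gaussian :: (real^'n) measure) borel (\<lambda>x. u \<bullet> x))"
    by (rule G.real_distribution_distr) (simp add: std_gaussian_def)
  show "real_distribution std_normal_distribution" by (rule real_dist_normal_dist)
  show "char (distr (std_gaussian :: (real^'n) measure) borel (\<lambda>x. u \<bullet> x)) = char std_normal_distribution"
  proof
    fix t :: real
    have "char (distr (std_gaussian :: (real^'n) measure) borel (\<lambda>x. u \<bullet> x)) t
       = (CLINT x|(std_gaussian :: (real^'n) measure). iexp (t * (u \<bullet> x)))"
      unfolding char_def by (subst integral_distr) (auto simp: std_gaussian_def)
    also have "\<dots> = (CLINT x|(lborel :: (real^'n) measure).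
        (\<Prod>b\<in>(Basis::(real^'n) set). std_normal_density (x \<bullet> b)) *\<^sub>R iexp (t * (u \<bullet> x)))"
      unfolding std_gaussian_eq by (subst integral_density) (auto simp: prod_nonneg)
    also have "\<dots> = (CLINT x|(lborel :: (real^'n) measure).
        (\<Prod>b\<in>(Basis::(real^'n) set). std_normal_density (x \<bullet> b) *\<^sub>R iexp ((t * (u \<bullet> b)) * (x \<bullet> b))))"
    proof (rule Bochner_Integration.integral_cong[OF refl])
      fix x :: "real^'n"
      have ux: "u \<bullet> x = (\<Sum>b\<in>(Basis::(real^'n) set). (u \<bullet> b) * (x \<bullet> b))"
        by (rule euclidean_inner)
      have "iexp (t * (u \<bullet> x)) = (\<Prod>b\<in>(Basis::(real^'n) set). iexp ((t * (u \<bullet> b)) * (x \<bullet> b)))"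
        unfolding ux by (simp add: sum_distrib_left sum_distrib_right mult.assoc exp_sum)
      then show "(\<Prod>b\<in>(Basis::(real^'n) set). std_normal_density (x \<bullet> b)) *\<^sub>R iexp (t * (u \<bullet> x)) =
        (\<Prod>b\<in>(Basis::(real^'n) set). std_normal_density (x \<bullet> b) *\<^sub>R iexp ((t * (u \<bullet> b)) * (x \<bullet> b)))"
        by (simp add: scaleR_conv_of_real prod.distrib)
    qed
    also have "\<dots> = (\<Prod>b\<in>(Basis::(real^'n) set). (CLINT s|lborel. std_normal_density s *\<^sub>R iexp ((t * (u \<bullet> b)) * s)))"
      by (rule integral_lborel_prod) (rule integrable_std_normal_iexp)
    also have "\<dots> = (\<Prod>b\<in>(Basis::(real^'n) set). complex_of_real (exp (- ((t * (u \<bullet> b))^2) / 2)))"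
      by (intro prod.cong refl) (rule char_std_normal_integral)
    also have "\<dots> = complex_of_real (exp (- (t^2) / 2))"
    proof -
      have "(\<Sum>b\<in>(Basis::(real^'n) set). (u \<bullet> b)^2) = 1"
        using u unfolding power2_norm_eq_inner[symmetric]
        by (metis (no_types, lifting) euclidean_inner power2_eq_square power2_norm_eq_inner power_one sum.cong)
      then have "(\<Sum>b\<in>(Basis::(real^'n) set). - ((t * (u \<bullet> b))^2) / 2) = - (t^2) / 2"
        by (simp add: power_mult_distrib sum_divide_distrib[symmetric] sum_negf sum_distrib_left[symmetric])
      then show ?thesis
        by (simp add: exp_sum[symmetric] of_real_prod[symmetric])
    qed
    also have "\<dots> = char std_normal_distribution t"
      by (simp add: char_std_normal_distribution)
    finally show "char (distr (std_gaussian :: (real^'n) measure) borel (\<lambda>x. u \<bullet> x)) t = char std_normal_distribution t" .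
  qed
qed

lemma nn_integral_normal: "(\<integral>\<^sup>+t. ennreal (normal_density m 1 t) \<partial>lborel) = 1"
proof -
  interpret prob_space "density lborel (\<lambda>x. ennreal (normal_density m 1 x))" by (rule prob_space_normal_density) simp
  have "emeasure (density lborel (\<lambda>x. ennreal (normal_density m 1 x))) UNIV = 1"
    using emeasure_space_1 by simp
  then show ?thesis by (simp add: emeasure_density)
qed

lemma normal_shift_identity:
  "std_normal_density t * exp (c * t - c^2) = exp (- (c^2) / 2) * normal_density c 1 t"
proof -
  have "- (t^2) / 2 + (c * t - c^2) = - (c^2) / 2 + (- ((t - c)^2) / 2)"
    by (simp add: power2_eq_square field_simps)
  then have "exp (- (t^2) / 2) * exp (c * t - c^2) = exp (- (c^2) / 2) * exp (- ((t - c)^2) / 2)"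
    by (simp add: exp_add[symmetric])
  then show ?thesis
    unfolding std_normal_density_def normal_density_def by simp
qed

lemma std_normal_tail:
  "emeasure std_normal_distribution {t. c^2 < c * t} \<le> ennreal (exp (- (c^2) / 2))"
proof -
  have "emeasure std_normal_distribution {t. c^2 < c * t}
      = (\<integral>\<^sup>+t. ennreal (std_normal_density t) * indicator {t. c^2 < c * t} t \<partial>lborel)"
    by (subst emeasure_density) auto
  also have "\<dots> \<le> (\<integral>\<^sup>+t. ennreal (exp (- (c^2) / 2)) * ennreal (normal_density c 1 t) \<partial>lborel)"
  proof (rule nn_integral_mono)
    fix t
    show "ennreal (std_normal_density t) * indicator {t. c^2 < c * t} t
        \<le> ennreal (exp (- (c^2) / 2)) * ennreal (normal_density c 1 t)"
    proof (cases "c^2 < c * t")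
      case True
      then have "1 \<le> exp (c * t - c^2)" by simp
      then have "std_normal_density t \<le> std_normal_density t * exp (c * t - c^2)"
        using mult_left_mono[OF \<open>1 \<le> exp (c * t - c^2)\<close> normal_density_nonneg[of 0 1 t]] by simp
      then have "std_normal_density t \<le> exp (- (c^2) / 2) * normal_density c 1 t"
        by (simp add: normal_shift_identity)
      then show ?thesis using True by (simp add: ennreal_mult[symmetric] ennreal_leI)
    qed simp
  qed
  also have "\<dots> = ennreal (exp (- (c^2) / 2))"
    by (simp add: nn_integral_cmult nn_integral_normal)
  finally show ?thesis .
qed

lemma std_normal_density_le: "std_normal_density t \<le> 1 / sqrt (2 * pi)"
  unfolding std_normal_density_def by (simp add: divide_le_cancel mult_le_cancel_left1)

lemma std_normal_set_le:
  assumes [measurable]: "S \<in> sets borel"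
  shows "emeasure std_normal_distribution S \<le> ennreal (1 / sqrt (2 * pi)) * emeasure lborel S"
proof -
  have "emeasure std_normal_distribution S
      = (\<integral>\<^sup>+t. ennreal (std_normal_density t) * indicator S t \<partial>lborel)"
    by (subst emeasure_density) auto
  also have "\<dots> \<le> (\<integral>\<^sup>+t. ennreal (1 / sqrt (2 * pi)) * indicator S t \<partial>lborel)"
    by (intro nn_integral_mono mult_right_mono ennreal_leI std_normal_density_le) auto
  also have "\<dots> = ennreal (1 / sqrt (2 * pi)) * emeasure lborel S"
    by (simp add: nn_integral_cmult_indicator)
  finally show ?thesis .
qed


lemma marg_measure:
  fixes u :: "real^'n"
  assumes "norm u = 1" and [measurable]: "S \<in> sets borel"
  shows "measure (std_gaussian :: (real^'n) measure) {x. u \<bullet> x \<in> S} = measure std_normal_distribution S"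
proof -
  have "measure std_normal_distribution S = measure (distr (std_gaussian :: (real^'n) measure) borel (\<lambda>x. u \<bullet> x)) S"
    using marginal_std_gaussian[OF assms(1)] by simp
  also have "\<dots> = measure (std_gaussian :: (real^'n) measure) ((\<lambda>x. u \<bullet> x) -` S \<inter> space std_gaussian)"
    by (rule measure_distr) (auto simp: std_gaussian_def)
  also have "(\<lambda>x. u \<bullet> x) -` S \<inter> space (std_gaussian :: (real^'n) measure) = {x. u \<bullet> x \<in> S}"
    by (auto simp: std_gaussian_def)
  finally show ?thesis by simp
qed

lemma std_normal_tail_measure:
  "measure std_normal_distribution {t. c^2 < c * t} \<le> exp (- (c^2) / 2)"
proof -
  interpret real_distribution std_normal_distribution by (rule real_dist_normal_dist)
  have "ennreal (measure std_normal_distribution {t. c^2 < c * t}) \<le> ennreal (exp (- (c^2) / 2))"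
    using std_normal_tail[of c] by (simp add: emeasure_eq_measure)
  then show ?thesis by (simp add: ennreal_le_iff)
qed

lemma std_normal_Icc_measure:
  assumes "a \<le> b"
  shows "measure std_normal_distribution {a..b} \<le> (b - a) / sqrt (2 * pi)"
proof -
  interpret real_distribution std_normal_distribution by (rule real_dist_normal_dist)
  have "ennreal (measure std_normal_distribution {a..b}) \<le> ennreal (1 / sqrt (2 * pi)) * ennreal (b - a)"
    using std_normal_set_le[of "{a..b}"] assms by (simp add: emeasure_eq_measure)
  also have "\<dots> = ennreal (1 / sqrt (2 * pi) * (b - a))"
    by (rule ennreal_mult[symmetric]) (use assms in auto)
  also have "\<dots> = ennreal ((b - a) / sqrt (2 * pi))" by simp
  finally show ?thesis using assms by (simp add: ennreal_le_iff)
qed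

theorem claim6p4:
  fixes d :: real and z z' :: "real^'n"
  assumes "d \<ge> 0"
    and "norm z = 1" and "norm z' = 1"
    and "0 < norm (z - z')" and "norm (z - z') \<le> 1/3"
  shows "measure std_gaussian {x. slab d z x \<noteq> slab d z' x}
           \<le> 5 * norm (z - z') * sqrt (ln (1 / norm (z - z')))"
proof -
  interpret G: prob_space "std_gaussian :: (real^'n) measure" by (rule prob_space_std_gaussian)
  define e where "e = norm (z - z')"
  define w where "w = (1 / e) *\<^sub>R (z - z')"
  define L where "L = ln (1 / e)"
  define T where "T = sqrt (2 * L)"
  define \<delta> where "\<delta> = e * T"
  have e0: "0 < e" and e3: "e \<le> 1/3" using assms by (auto simp: e_def)
  have "e * exp 1 \<le> e * 3" using exp_le e0 by (intro mult_left_mono) auto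
  then have h: "e * exp 1 \<le> 1" using e3 by linarith
  have "exp 1 \<le> 1 / e" using e0 h by (simp add: field_simps)
  then have L1: "1 \<le> L" unfolding L_def using e0 by (subst ln_ge_iff) auto
  have T0: "0 < T" using L1 by (simp add: T_def)
  have TT: "T^2 = 2 * L" using L1 by (simp add: T_def)
  have wn: "norm w = 1" using e0 by (simp add: w_def e_def)
  have zw: "(z - z') \<bullet> x = e * (w \<bullet> x)" for x
    using e0 by (simp add: w_def)
  have sw [measurable]: "{x :: real^'n. x \<in> A} \<in> sets std_gaussian" if "A \<in> sets borel" for A
    using that by (simp add: std_gaussian_def)
  define A1 where "A1 = {x :: real^'n. w \<bullet> x \<in> {t. T^2 < T * t}}"
  define A2 where "A2 = {x :: real^'n. w \<bullet> x \<in> {t. (-T)^2 < (-T) * t}}"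
  define B1 where "B1 = {x :: real^'n. z \<bullet> x \<in> {d - \<delta> .. d + \<delta>}}"
  define B2 where "B2 = {x :: real^'n. z \<bullet> x \<in> {-d - \<delta> .. -d + \<delta>}}"
  have meas: "A1 \<in> sets std_gaussian" "A2 \<in> sets std_gaussian" "B1 \<in> sets std_gaussian" "B2 \<in> sets std_gaussian"
    unfolding A1_def A2_def B1_def B2_def std_gaussian_def by (auto simp: sets_density)
  have sub: "{x. slab d z x \<noteq> slab d z' x} \<subseteq> A1 \<union> A2 \<union> B1 \<union> B2"
  proof
    fix x assume x: "x \<in> {x. slab d z x \<noteq> slab d z' x}"
    show "x \<in> A1 \<union> A2 \<union> B1 \<union> B2"
    proof (rule ccontr)
      assume "x \<notin> A1 \<union> A2 \<union> B1 \<union> B2"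
      then have n: "T * (w \<bullet> x) \<le> T^2" "- T * (w \<bullet> x) \<le> T^2"
        and nb: "z \<bullet> x \<notin> {d - \<delta> .. d + \<delta>}" "z \<bullet> x \<notin> {-d - \<delta> .. -d + \<delta>}"
        by (auto simp: A1_def A2_def B1_def B2_def)
      have "T * (w \<bullet> x) \<le> T * T" using n(1) by (simp add: power2_eq_square)
      then have h1: "w \<bullet> x \<le> T" by (simp only: mult_le_cancel_left_pos[OF T0])
      have "T * (- (w \<bullet> x)) \<le> T * T" using n(2) by (simp add: power2_eq_square)
      then have h2: "- (w \<bullet> x) \<le> T" by (simp only: mult_le_cancel_left_pos[OF T0])
      have "\<bar>w \<bullet> x\<bar> \<le> T" using h1 h2 by linarith
      then have "e * \<bar>w \<bullet> x\<bar> \<le> \<delta>" unfolding \<delta>_def using e0 by (simp add: mult_left_mono)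
      then have "\<bar>z \<bullet> x - z' \<bullet> x\<bar> \<le> \<delta>"
        using zw[of x] e0 by (simp add: inner_diff_left abs_mult)
      then show False using x nb by (auto simp: slab_def split: if_splits)
    qed
  qed
  have "measure std_gaussian {x. slab d z x \<noteq> slab d z' x} \<le> measure std_gaussian (A1 \<union> A2 \<union> B1 \<union> B2)"
    by (rule G.finite_measure_mono[OF sub]) (use meas in auto)
  also have "\<dots> \<le> measure std_gaussian A1 + measure std_gaussian A2 + measure std_gaussian B1 + measure std_gaussian B2"
    using meas measure_Un_le[of "A1 \<union> A2 \<union> B1" std_gaussian B2] measure_Un_le[of "A1 \<union> A2" std_gaussian B1]
      measure_Un_le[of A1 std_gaussian A2] by auto
  also have "measure std_gaussian A1 \<le> exp (- (T^2) / 2)"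
    unfolding A1_def using std_normal_tail_measure[of T] by (subst marg_measure[OF wn]) auto
  also have "measure std_gaussian A2 \<le> exp (- (T^2) / 2)"
    unfolding A2_def using std_normal_tail_measure[of "-T"] by (subst marg_measure[OF wn]) auto
  also have "measure std_gaussian B1 \<le> 2 * \<delta> / sqrt (2 * pi)"
    unfolding B1_def using std_normal_Icc_measure[of "d - \<delta>" "d + \<delta>"] T0 e0
    by (subst marg_measure) (auto simp: assms \<delta>_def mult.commute)
  also have "measure std_gaussian B2 \<le> 2 * \<delta> / sqrt (2 * pi)"
    unfolding B2_def using std_normal_Icc_measure[of "-d - \<delta>" "-d + \<delta>"] T0 e0
    by (subst marg_measure) (auto simp: assms \<delta>_def mult.commute)
  also have "exp (- (T^2) / 2) = e"
    using e0 by (simp add: TT L_def exp_minus)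
  finally have main: "measure std_gaussian {x. slab d z x \<noteq> slab d z' x} \<le> 2 * e + 4 * \<delta> / sqrt (2 * pi)"
    by simp
  have sq: "T / sqrt (2 * pi) = sqrt L / sqrt pi"
    unfolding T_def by (simp add: real_sqrt_mult)
  have pi43: "4/3 \<le> sqrt pi"
    using pi_gt3 by (intro real_le_rsqrt) (simp add: power2_eq_square)
  have sL: "1 \<le> sqrt L" using L1 by simp
  have "4 * \<delta> / sqrt (2 * pi) = 4 * e * (sqrt L / sqrt pi)"
    unfolding \<delta>_def sq[symmetric] by simp
  also have "\<dots> \<le> 4 * e * (sqrt L * (3/4))"
  proof -
    have "sqrt L / sqrt pi \<le> sqrt L / (4/3)"
      using pi43 sL by (intro divide_left_mono) auto
    then have h: "sqrt L / sqrt pi \<le> sqrt L * (3/4)" by simp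
    show ?thesis by (rule mult_left_mono[OF h]) (use e0 in simp)
  qed
  finally have "measure std_gaussian {x. slab d z x \<noteq> slab d z' x} \<le> 2 * e + 3 * e * sqrt L"
    using main by simp
  also have "\<dots> \<le> 5 * e * sqrt L"
    using sL e0 by (simp add: mult_left_mono algebra_simps)
  finally show ?thesis by (simp add: e_def L_def)
qed

end
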